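(* Let $X$ be any $E\mathcal M$-simplicial set. Then the map $\Phi\colon E\mathrm{Inj}(2\times\omega,\omega)\times_{E\mathcal M^2}(X\times * )\to X\times *\cong X$ has image exactly $X^\mu$ and is an isomorphism $E\mathrm{Inj}(2\times\omega,\omega)\times_{E\mathcal M^2}(X\times * )\cong X^\mu$.
   Context: $\omega=\{1,2,\dots\}$, $\mathcal M$ the monoid of injections $\omega\to\omega$, $\mathcal M_A$ those fixing $A\subset\omega$ pointwise; $A$ co-infinite if $\omega\setminus A$ is infinite. $E\mathcal M$ is the simplicial monoid with $(E\mathcal M)_n=\mathcal M^{1+n}$, pointwise multiplication, structure maps by precomposition. $x\in X_n$ is $k$-supported on $A$ if $i_k(u).x=x$ for all $u\in\mathcal M_A$ ($i_k$ inclusion of the $(1+k)$-th factor). $X^\mu\subset X$ is the sub-object of simplices that are for every $k$ $k$-supported on some co-infinite set. $*$ is the terminal $E\mathcal M$-simplicial set. $E\mathrm{Inj}(2\times\omega,\omega)$ has $m$-simplices tuples $(f_0,\dots,f_m)$ of injections $2\times\omega\to\omega$ ($2=\{1,2\}$). $E\mathrm{Inj}(2\times\omega,\omega)\times_{E\mathcal M^2}(X\times Y)$ is the quotient of $E\mathrm{Inj}(2\times\omega,\omega)\times X\times Y$ by the equivalence relation generated on $m$-simplices by $(f_0,\dots,f_m;u.x,v.y)\sim(f_0(u^{(0)}\amalg v^{(0)}),\dots,f_m(u^{(m)}\amalg v^{(m)});x,y)$ for $u=(u^{(i)}),v=(v^{(i)})\in(E\mathcal M)_m$, with $E\mathcal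 M$ acting by postcomposition; $\Phi[f_0,\dots,f_m;x,y]=((f_0\iota_1,\dots,f_m\iota_1).x,(f_0\iota_2,\dots,f_m\iota_2).y)$ where $\iota_j(t)=(j,t)$. *)

theory Defs
  imports Main
begin

text \<open>omega = {1,2,...} is modelled by the type nat (relabelled 0-based).
  An n-simplex of E M, i.e. an element of M^(1+n), is a list of n+1 injections.
  The set 2 x omega is modelled by nat + nat, with iota_1 = Inl, iota_2 = Inr,
  so that u \<amalg> v becomes map_sum u v.
  A simplicial operator alpha : [m] -> [n] (monotone) is the list
  [alpha 0, ..., alpha m].\<close>

definition simp_op :: "nat \<Rightarrow> nat \<Rightarrow> nat list \<Rightarrow> bool" where
  "simp_op m n \<alpha> \<longleftrightarrow> length \<alpha> = Suc m \<and> sorted \<alpha> \<and> (\<forall>a\<in>set \<alpha>. a \<le> n)"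

definition op_id :: "nat \<Rightarrow> nat list" where
  "op_id n = [0..<Suc n]"

definition op_comp :: "nat list \<Rightarrow> nat list \<Rightarrow> nat list" where
  "op_comp \<alpha> \<beta> = map (\<lambda>j. \<alpha> ! j) \<beta>"

definition inj_tuple :: "nat \<Rightarrow> ('c \<Rightarrow> nat) list \<Rightarrow> bool" where
  "inj_tuple n u \<longleftrightarrow> length u = Suc n \<and> (\<forall>g\<in>set u. inj g)"

abbreviation EM_simplex :: "nat \<Rightarrow> (nat \<Rightarrow> nat) list \<Rightarrow> bool" where
  "EM_simplex n u \<equiv> inj_tuple n u"

abbreviation EInj_simplex :: "nat \<Rightarrow> (nat + nat \<Rightarrow> nat) list \<Rightarrow> bool" where
  "EInj_simplex n f \<equiv> inj_tuple n f"

definition tuple_mult :: "('b \<Rightarrow> 'c) list \<Rightarrow> ('a \<Rightarrow> 'b) list \<Rightarrow> ('a \<Rightarrow> 'c) list" where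
  "tuple_mult u v = map2 (\<circ>) u v"

definition tuple_unit :: "nat \<Rightarrow> (nat \<Rightarrow> nat) list" where
  "tuple_unit n = replicate (Suc n) id"

definition tuple_restr :: "'c list \<Rightarrow> nat list \<Rightarrow> 'c list" where
  "tuple_restr u \<alpha> = map (\<lambda>j. u ! j) \<alpha>"

text \<open>X n is the set of n-simplices; sim m n \<alpha> : X n -> X m is the simplicial
  operator induced by \<alpha> : [m] -> [n]; act n u : X n -> X n is the action of
  u in (E M)_n.\<close>

definition EM_sset ::
  "(nat \<Rightarrow> 'a set) \<Rightarrow> (nat \<Rightarrow> nat \<Rightarrow> nat list \<Rightarrow> 'a \<Rightarrow> 'a)
     \<Rightarrow> (nat \<Rightarrow> (nat \<Rightarrow> nat) list \<Rightarrow> 'a \<Rightarrow> 'a) \<Rightarrow> bool" where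
  "EM_sset X sim act \<longleftrightarrow>
     (\<forall>m n \<alpha> x. simp_op m n \<alpha> \<longrightarrow> x \<in> X n \<longrightarrow> sim m n \<alpha> x \<in> X m)
   \<and> (\<forall>n x. x \<in> X n \<longrightarrow> sim n n (op_id n) x = x)
   \<and> (\<forall>k m n \<alpha> \<beta> x. simp_op m n \<alpha> \<longrightarrow> simp_op k m \<beta> \<longrightarrow> x \<in> X n \<longrightarrow>
        sim k m \<beta> (sim m n \<alpha> x) = sim k n (op_comp \<alpha> \<beta>) x)
   \<and> (\<forall>n u x. EM_simplex n u \<longrightarrow> x \<in> X n \<longrightarrow> act n u x \<in> X n)
   \<and> (\<forall>n x. x \<in> X n \<longrightarrow> act n (tuple_unit n) x = x)
   \<and> (\<forall>n u v x. EM_simplex n u \<longrightarrow> EM_simplex n v \<longrightarrow> x \<in> X n \<longrightarrow>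
        act n u (act n v x) = act n (tuple_mult u v) x)
   \<and> (\<forall>m n \<alpha> u x. simp_op m n \<alpha> \<longrightarrow> EM_simplex n u \<longrightarrow> x \<in> X n \<longrightarrow>
        sim m n \<alpha> (act n u x) = act m (tuple_restr u \<alpha>) (sim m n \<alpha> x))"

definition term_X :: "nat \<Rightarrow> unit set" where "term_X n = {()}"
definition term_sim :: "nat \<Rightarrow> nat \<Rightarrow> nat list \<Rightarrow> unit \<Rightarrow> unit" where "term_sim m n \<alpha> y = ()"
definition term_act :: "nat \<Rightarrow> (nat \<Rightarrow> nat) list \<Rightarrow> unit \<Rightarrow> unit" where "term_act n u y = ()"

definition incl_k :: "nat \<Rightarrow> nat \<Rightarrow> (nat \<Rightarrow> nat) \<Rightarrow> (nat \<Rightarrow> nat) list" where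
  "incl_k n k u = (tuple_unit n)[k := u]"

definition M_fix :: "nat set \<Rightarrow> (nat \<Rightarrow> nat) set" where
  "M_fix A = {u. inj u \<and> (\<forall>a\<in>A. u a = a)}"

definition k_supported ::
  "(nat \<Rightarrow> (nat \<Rightarrow> nat) list \<Rightarrow> 'a \<Rightarrow> 'a) \<Rightarrow> nat \<Rightarrow> nat \<Rightarrow> nat set \<Rightarrow> 'a \<Rightarrow> bool" where
  "k_supported act n k A x \<longleftrightarrow> (\<forall>u\<in>M_fix A. act n (incl_k n k u) x = x)"

definition coinfinite :: "nat set \<Rightarrow> bool" where
  "coinfinite A \<longleftrightarrow> infinite (UNIV - A)"

definition X_mu ::
  "(nat \<Rightarrow> 'a set) \<Rightarrow> (nat \<Rightarrow> (nat \<Rightarrow> nat) list \<Rightarrow> 'a \<Rightarrow> 'a) \<Rightarrow> nat \<Rightarrow> 'a set" where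
  "X_mu X act n = {x \<in> X n. \<forall>k\<le>n. \<exists>A. coinfinite A \<and> k_supported act n k A x}"

text \<open>m-simplices of E Inj(2 x omega, omega) x X x Y (representatives)\<close>
definition bal_reps :: "(nat \<Rightarrow> 'a set) \<Rightarrow> (nat \<Rightarrow> 'b set) \<Rightarrow> nat
     \<Rightarrow> ((nat + nat \<Rightarrow> nat) list \<times> 'a \<times> 'b) set" where
  "bal_reps X Y m = {(f, x, y). EInj_simplex m f \<and> x \<in> X m \<and> y \<in> Y m}"

definition bal_gen ::
  "(nat \<Rightarrow> 'a set) \<Rightarrow> (nat \<Rightarrow> (nat \<Rightarrow> nat) list \<Rightarrow> 'a \<Rightarrow> 'a)
   \<Rightarrow> (nat \<Rightarrow> 'b set) \<Rightarrow> (nat \<Rightarrow> (nat \<Rightarrow> nat) list \<Rightarrow> 'b \<Rightarrow> 'b) \<Rightarrow> nat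
   \<Rightarrow> ((nat + nat \<Rightarrow> nat) list \<times> 'a \<times> 'b) \<Rightarrow> ((nat + nat \<Rightarrow> nat) list \<times> 'a \<times> 'b) \<Rightarrow> bool" where
  "bal_gen X actX Y actY m p q \<longleftrightarrow>
     (\<exists>f u v x y. EInj_simplex m f \<and> EM_simplex m u \<and> EM_simplex m v \<and> x \<in> X m \<and> y \<in> Y m
        \<and> p = (f, actX m u x, actY m v y)
        \<and> q = (map2 (\<lambda>g (a, b). g \<circ> map_sum a b) f (zip u v), x, y))"

definition bal_rel ::
  "(nat \<Rightarrow> 'a set) \<Rightarrow> (nat \<Rightarrow> (nat \<Rightarrow> nat) list \<Rightarrow> 'a \<Rightarrow> 'a)
   \<Rightarrow> (nat \<Rightarrow> 'b set) \<Rightarrow> (nat \<Rightarrow> (nat \<Rightarrow> nat) list \<Rightarrow> 'b \<Rightarrow> 'b) \<Rightarrow> nat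
   \<Rightarrow> ((nat + nat \<Rightarrow> nat) list \<times> 'a \<times> 'b) \<Rightarrow> ((nat + nat \<Rightarrow> nat) list \<times> 'a \<times> 'b) \<Rightarrow> bool" where
  "bal_rel X actX Y actY m = equivclp (bal_gen X actX Y actY m)"

definition Phi ::
  "(nat \<Rightarrow> (nat \<Rightarrow> nat) list \<Rightarrow> 'a \<Rightarrow> 'a) \<Rightarrow> (nat \<Rightarrow> (nat \<Rightarrow> nat) list \<Rightarrow> 'b \<Rightarrow> 'b) \<Rightarrow> nat
   \<Rightarrow> ((nat + nat \<Rightarrow> nat) list \<times> 'a \<times> 'b) \<Rightarrow> 'a \<times> 'b" where
  "Phi actX actY m p = (case p of (f, x, y) \<Rightarrow>
      (actX m (map (\<lambda>g. g \<circ> Inl) f) x, actY m (map (\<lambda>g. g \<circ> Inr) f) y))"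

end

theory Submission
  imports Defs "HOL-Library.Infinite_Set"
begin

lemma split_inf:
  fixes S :: "nat set" assumes "infinite S"
  shows "\<exists>T. T \<subseteq> S \<and> infinite T \<and> infinite (S - T)"
proof -
  let ?e = "enumerate S"
  have inj: "inj ?e" using inj_enumerate[OF assms] .
  have ev: "infinite {n::nat. even n}"
    by (metis (mono_tags) infinite_nat_iff_unbounded_le dvd_triv_left mem_Collect_eq le_add2 mult_2)
  have od: "infinite {n::nat. odd n}"
    unfolding infinite_nat_iff_unbounded_le by (metis odd_two_times_div_two_succ le_add2 mult_2 dvd_triv_left even_add odd_one mem_Collect_eq le_add1 add.commute)
  let ?T = "?e ` {n. even n}"
  have "?T \<subseteq> S" using enumerate_in_set[OF assms] by auto
  moreover have "infinite ?T" using ev inj by (simp add: finite_image_iff inj_on_subset)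
  moreover have "?e ` {n. odd n} \<subseteq> S - ?T"
    using enumerate_in_set[OF assms] inj by (auto dest: injD)
  moreover have "infinite (?e ` {n. odd n})" using od inj by (simp add: finite_image_iff inj_on_subset)
  ultimately show ?thesis by (meson finite_subset)
qed

lemma disj_inf:
  fixes K K' :: "nat set" assumes "infinite K" "infinite K'"
  shows "\<exists>M M'. M \<subseteq> K \<and> M' \<subseteq> K' \<and> M \<inter> M' = {} \<and> infinite M \<and> infinite M'"
proof (cases "infinite (K - K')")
  case True then show ?thesis using assms(2) by (rule_tac x="K - K'" in exI, rule_tac x=K' in exI) auto
next
  case False
  then have "infinite (K \<inter> K')" using assms(1)
    by (metis Int_Diff_Un finite_Un)
  then obtain T where T: "T \<subseteq> K \<inter> K'" "infinite T" "infinite (K \<inter> K' - T)" using split_inf by blast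
  then show ?thesis by (rule_tac x=T in exI, rule_tac x="K \<inter> K' - T" in exI) auto
qed

lemma shift_inf:
  fixes M :: "nat set" assumes "infinite M"
  shows "\<exists>g. inj_on g M \<and> g ` M \<subseteq> M \<and> infinite (M - g ` M)"
proof -
  let ?e = "enumerate M"
  have b: "bij_betw ?e UNIV M" using bij_enumerate[OF assms] .
  obtain T where T: "T \<subseteq> M" "infinite T" "infinite (M - T)" using split_inf[OF assms] by blast
  let ?g = "enumerate T \<circ> inv_into UNIV ?e"
  have "inj_on (inv_into UNIV ?e) M" by (rule inj_on_inv_into) (use b in \<open>simp add: bij_betw_def\<close>)
  then have "inj_on ?g M" using inj_enumerate[OF T(2)]
    by (intro comp_inj_on) (auto intro: inj_on_subset[OF _ subset_UNIV])
  moreover have "?g ` M \<subseteq> T" using enumerate_in_set[OF T(2)] by auto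
  moreover have "M - T \<subseteq> M - ?g ` M" using \<open>?g ` M \<subseteq> T\<close> by auto
  then have "infinite (M - ?g ` M)" using T(3) finite_subset by blast
  ultimately show ?thesis using T(1) by (intro exI[of _ ?g]) blast
qed

lemma level_cc:
  fixes A A' :: "nat set" assumes "coinfinite A" "coinfinite A'"
  shows "\<exists>c c'. inj c \<and> inj c' \<and> (\<forall>a\<in>A. c a = a) \<and> (\<forall>a\<in>A'. c' a = a) \<and> c \<circ> c' = c' \<circ> c
     \<and> infinite (- range c) \<and> infinite (- range c')"
proof -
  obtain M M' where M: "M \<subseteq> - A" "M' \<subseteq> - A'" "M \<inter> M' = {}" "infinite M" "infinite M'"
    using disj_inf[of "-A" "-A'"] assms unfolding coinfinite_def by (auto simp: Compl_eq_Diff_UNIV)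
  obtain g where g: "inj_on g M" "g ` M \<subseteq> M" "infinite (M - g ` M)" using shift_inf M(4) by blast
  obtain g' where g': "inj_on g' M'" "g' ` M' \<subseteq> M'" "infinite (M' - g' ` M')" using shift_inf M(5) by blast
  define c where "c n = (if n \<in> M then g n else n)" for n
  define c' where "c' n = (if n \<in> M' then g' n else n)" for n
  have i1: "inj c" unfolding c_def using g by (auto simp: inj_on_def) 
  have i2: "inj c'" unfolding c'_def using g' by (auto simp: inj_on_def)
  have f1: "\<forall>a\<in>A. c a = a" using M unfolding c_def by auto
  have f2: "\<forall>a\<in>A'. c' a = a" using M unfolding c'_def by auto
  have cm: "c \<circ> c' = c' \<circ> c" using M g g' unfolding c_def c'_def by (auto simp: fun_eq_iff)
  have s1: "M - g ` M \<subseteq> - range c" using g unfolding c_def by auto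
  have r1: "infinite (- range c)" using g(3) s1 finite_subset by blast
  have s2: "M' - g' ` M' \<subseteq> - range c'" using g' unfolding c'_def by auto
  have r2: "infinite (- range c')" using g'(3) s2 finite_subset by blast
  show ?thesis by (rule exI[of _ c], rule exI[of _ c'], intro conjI i1 i2 f1 f2 cm r1 r2)
qed

lemma ext_inl:
  fixes c :: "nat \<Rightarrow> nat" assumes "inj c" "infinite (- range c)"
  shows "\<exists>G :: nat + nat \<Rightarrow> nat. inj G \<and> G \<circ> Inl = c"
proof -
  let ?e = "enumerate (- range c)"
  have ie: "inj ?e" using inj_enumerate[OF assms(2)] .
  have eB: "?e n \<notin> range c" for n using enumerate_in_set[OF assms(2)] by blast
  have "inj (case_sum c ?e)"
  proof (rule injI)
    fix p q assume h: "case_sum c ?e p = case_sum c ?e q"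
    show "p = q"
    proof (cases p; cases q)
      fix a b assume "p = Inl a" "q = Inl b" then show ?thesis using h assms(1) by (auto dest: injD)
    next
      fix a b assume "p = Inl a" "q = Inr b" then show ?thesis using h eB by (metis rangeI sum.case)
    next
      fix a b assume "p = Inr a" "q = Inl b" then show ?thesis using h eB by (metis rangeI sum.case)
    next
      fix a b assume "p = Inr a" "q = Inr b" then show ?thesis using h ie by (auto dest: injD)
    qed
  qed
  moreover have "case_sum c ?e \<circ> Inl = c" by auto
  ultimately show ?thesis by blast
qed

lemma claimB_level:
  fixes F F' :: "nat + nat \<Rightarrow> nat" assumes "inj F" "inj F'" "F \<circ> Inl = F' \<circ> Inl"
  shows "\<exists>(H::nat+nat\<Rightarrow>nat) (v::nat\<Rightarrow>nat) (v'::nat\<Rightarrow>nat). inj H \<and> inj v \<and> inj v' \<and> H \<circ> map_sum id v = F \<and> H \<circ> map_sum id v' = F'"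
proof -
  let ?B = "range (F \<circ> Inr) \<union> range (F' \<circ> Inr)"
  have "inj (F \<circ> Inr)" using assms(1) by (auto simp: inj_on_def dest: injD)
  then have "infinite (range (F \<circ> Inr))" using finite_imageD by blast
  then have inf: "infinite ?B" by simp
  let ?e = "enumerate ?B"
  have b: "bij_betw ?e UNIV ?B" using bij_enumerate[OF inf] .
  have ie: "inj ?e" using inj_enumerate[OF inf] .
  define H where "H = case_sum (F \<circ> Inl) ?e"
  have FL: "F (Inl a) \<noteq> F (Inr b)" "F' (Inl a) \<noteq> F' (Inr b)" for a b using assms by (auto dest: injD)
  have FL2: "F (Inl a) = F' (Inl a)" for a using assms(3) by (metis comp_apply)
  have nB: "F (Inl a) \<notin> ?B" for a using FL FL2 by (auto simp: image_iff)
  have eB: "?e n \<in> ?B" for n using enumerate_in_set[OF inf] .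
  have "inj H"
  proof (rule injI)
    fix p q assume h: "H p = H q"
    show "p = q"
    proof (cases p; cases q)
      fix a b assume "p = Inl a" "q = Inl b" then show ?thesis using h assms(1) unfolding H_def by (auto dest: injD)
    next
      fix a b assume "p = Inl a" "q = Inr b" then show ?thesis using h nB[of a] eB[of b] by (simp add: H_def)
    next
      fix a b assume "p = Inr a" "q = Inl b" then show ?thesis using h nB[of b] eB[of a] by (simp add: H_def)
    next
      fix a b assume "p = Inr a" "q = Inr b" then show ?thesis using h ie unfolding H_def by (auto dest: injD)
    qed
  qed
  define v where "v = inv_into UNIV ?e \<circ> F \<circ> Inr"
  define v' where "v' = inv_into UNIV ?e \<circ> F' \<circ> Inr"
  have ii: "inj_on (inv_into UNIV ?e) ?B" using b by (intro inj_on_inv_into) (simp add: bij_betw_def)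
  have "inj v" unfolding v_def
  proof (rule injI)
    fix a b assume "(inv_into UNIV ?e \<circ> F \<circ> Inr) a = (inv_into UNIV ?e \<circ> F \<circ> Inr) b"
    then have "inv_into UNIV ?e (F (Inr a)) = inv_into UNIV ?e (F (Inr b))" by simp
    then have "F (Inr a) = F (Inr b)" by (rule inj_onD[OF ii]) auto
    then show "a = b" using assms(1) by (simp add: inj_eq)
  qed
  moreover have "inj v'" unfolding v'_def
  proof (rule injI)
    fix a b assume "(inv_into UNIV ?e \<circ> F' \<circ> Inr) a = (inv_into UNIV ?e \<circ> F' \<circ> Inr) b"
    then have "inv_into UNIV ?e (F' (Inr a)) = inv_into UNIV ?e (F' (Inr b))" by simp
    then have "F' (Inr a) = F' (Inr b)" by (rule inj_onD[OF ii]) auto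
    then show "a = b" using assms(2) by (simp add: inj_eq)
  qed
  moreover have "H \<circ> map_sum id v = F" unfolding v_def
  proof (rule ext)
    fix x show "(H \<circ> map_sum id (inv_into UNIV ?e \<circ> F \<circ> Inr)) x = F x"
    proof (cases x)
      case (Inr b') have "F (Inr b') \<in> range ?e" using b by (auto simp: bij_betw_def)
      then show ?thesis using Inr by (simp add: H_def f_inv_into_f)
    qed (simp add: H_def)
  qed
  moreover have "H \<circ> map_sum id v' = F'" unfolding v'_def
  proof (rule ext)
    fix x show "(H \<circ> map_sum id (inv_into UNIV ?e \<circ> F' \<circ> Inr)) x = F' x"
    proof (cases x)
      case (Inr b') have "F' (Inr b') \<in> range ?e" using b by (auto simp: bij_betw_def)
      then show ?thesis using Inr by (simp add: H_def f_inv_into_f)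
    qed (simp add: H_def FL2)
  qed
  ultimately show ?thesis using \<open>inj H\<close> by (intro exI[of _ H] exI[of _ v] exI[of _ v']) blast
qed

locale emss =
  fixes X :: "nat \<Rightarrow> 'a set" and sim :: "nat \<Rightarrow> nat \<Rightarrow> nat list \<Rightarrow> 'a \<Rightarrow> 'a"
    and act :: "nat \<Rightarrow> (nat \<Rightarrow> nat) list \<Rightarrow> 'a \<Rightarrow> 'a"
  assumes em: "EM_sset X sim act"
begin

lemma act_closed: "EM_simplex n u \<Longrightarrow> x \<in> X n \<Longrightarrow> act n u x \<in> X n"
  using em unfolding EM_sset_def by blast
lemma act_unit: "x \<in> X n \<Longrightarrow> act n (tuple_unit n) x = x"
  using em unfolding EM_sset_def by blast
lemma act_mult: "EM_simplex n u \<Longrightarrow> EM_simplex n v \<Longrightarrow> x \<in> X n \<Longrightarrow> act n u (act n v x) = act n (tuple_mult u v) x"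
  using em unfolding EM_sset_def by blast
lemma sim_act: "simp_op m n \<alpha> \<Longrightarrow> EM_simplex n u \<Longrightarrow> x \<in> X n \<Longrightarrow>
        sim m n \<alpha> (act n u x) = act m (tuple_restr u \<alpha>) (sim m n \<alpha> x)"
  using em unfolding EM_sset_def by blast

end

definition bmul :: "(nat + nat \<Rightarrow> nat) list \<Rightarrow> (nat \<Rightarrow> nat) list \<Rightarrow> (nat \<Rightarrow> nat) list \<Rightarrow> (nat + nat \<Rightarrow> nat) list" where
  "bmul f u v = map2 (\<lambda>g (a, b). g \<circ> map_sum a b) f (zip u v)"

lemma bmul_length: "length f = Suc m \<Longrightarrow> length u = Suc m \<Longrightarrow> length v = Suc m \<Longrightarrow> length (bmul f u v) = Suc m"
  unfolding bmul_def by simp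

lemma bmul_nth: "length f = Suc m \<Longrightarrow> length u = Suc m \<Longrightarrow> length v = Suc m \<Longrightarrow> i < Suc m \<Longrightarrow>
   bmul f u v ! i = f ! i \<circ> map_sum (u ! i) (v ! i)"
  unfolding bmul_def by simp

lemma inj_map_sum': "inj a \<Longrightarrow> inj b \<Longrightarrow> inj (map_sum a b)"
proof (rule injI)
  fix x y assume "inj a" "inj b" "map_sum a b x = map_sum a b y" then show "x = y"
    by (cases x; cases y) (simp_all add: inj_eq)
qed

lemma bmul_inj: "inj_tuple m f \<Longrightarrow> inj_tuple m u \<Longrightarrow> inj_tuple m v \<Longrightarrow> inj_tuple m (bmul f u v)"
proof -
  assume a: "inj_tuple m f" "inj_tuple m u" "inj_tuple m v"
  then have l: "length f = Suc m" "length u = Suc m" "length v = Suc m" unfolding inj_tuple_def by auto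
  have "inj (bmul f u v ! i)" if "i < Suc m" for i
    using a that l unfolding inj_tuple_def
    by (simp add: bmul_nth[OF l that]) (intro inj_compose inj_map_sum'; simp)
  then show ?thesis using l unfolding inj_tuple_def by (auto simp: bmul_length in_set_conv_nth)
qed

lemma unit_len[simp]: "length (tuple_unit m) = Suc m" by (simp add: tuple_unit_def)
lemma unit_nth[simp]: "i < Suc m \<Longrightarrow> tuple_unit m ! i = id" unfolding tuple_unit_def by (rule nth_replicate)
lemma unit_inj: "inj_tuple m (tuple_unit m)" by (simp add: inj_tuple_def tuple_unit_def)

lemma term_act_ext: "term_act = (\<lambda>a b c. ())" by (simp add: fun_eq_iff)

lemma Phi_simp: "Phi act term_act m (f, x, y) = (act m (map (\<lambda>g. g \<circ> Inl) f) x, ())"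
  by (simp add: Phi_def)

lemma inlp_inj: "inj_tuple m f \<Longrightarrow> inj_tuple m (map (\<lambda>g. g \<circ> Inl) f)"
  unfolding inj_tuple_def by (auto intro: inj_compose)

context emss begin

lemma gen_step: "inj_tuple m f \<Longrightarrow> inj_tuple m u \<Longrightarrow> inj_tuple m v \<Longrightarrow> x \<in> X m \<Longrightarrow>
  bal_gen X act term_X term_act m (f, act m u x, ()) (bmul f u v, x, ())"
  unfolding bal_gen_def bmul_def term_X_def
  by (rule exI[of _ f], rule exI[of _ u], rule exI[of _ v], rule exI[of _ x], rule exI[of _ "()"]) simp

lemma Phi_gen: "bal_gen X act term_X term_act m p q \<Longrightarrow> Phi act term_act m p = Phi act term_act m q"
proof -
  assume "bal_gen X act term_X term_act m p q"
  then obtain f u v x y where h: "inj_tuple m f" "inj_tuple m u" "inj_tuple m v" "x \<in> X m"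
     "p = (f, act m u x, term_act m v y)" "q = (bmul f u v, x, y)"
    unfolding bal_gen_def bmul_def by blast
  have l: "length f = Suc m" "length u = Suc m" "length v = Suc m" using h(1-3) unfolding inj_tuple_def by auto
  have e: "map (\<lambda>g. g \<circ> Inl) (bmul f u v) = tuple_mult (map (\<lambda>g. g \<circ> Inl) f) u"
  proof (rule nth_equalityI)
    show "length (map (\<lambda>g. g \<circ> Inl) (bmul f u v)) = length (tuple_mult (map (\<lambda>g. g \<circ> Inl) f) u)"
      using l by (simp add: bmul_length tuple_mult_def)
    fix i assume "i < length (map (\<lambda>g. g \<circ> Inl) (bmul f u v))"
    then have i: "i < Suc m" using l by (simp add: bmul_length)
    show "map (\<lambda>g. g \<circ> Inl) (bmul f u v) ! i = tuple_mult (map (\<lambda>g. g \<circ> Inl) f) u ! i"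
      using l i by (simp add: bmul_length bmul_nth[OF l i] tuple_mult_def fun_eq_iff)
  qed
  show ?thesis using h act_mult[OF inlp_inj[OF h(1)] h(2) h(4)] by (simp add: Phi_simp e)
qed

lemma Phi_rel: "bal_rel X act term_X term_act m p q \<Longrightarrow> Phi act term_act m p = Phi act term_act m q"
  unfolding bal_rel_def
proof (induction rule: equivclp_induct)
  case (step y z)
  from step(2) have "Phi act term_act m y = Phi act term_act m z" using Phi_gen by (metis (no_types))
  with step(3) show ?case by (simp add: term_act_ext)
qed simp

lemma claimB:
  assumes "inj_tuple m F" "inj_tuple m F'" "map (\<lambda>g. g \<circ> Inl) F = map (\<lambda>g. g \<circ> Inl) F'" "z \<in> X m"
  shows "bal_rel X act term_X term_act m (F, z, ()) (F', z, ())"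
proof -
  have "\<forall>i. \<exists>t :: (nat+nat\<Rightarrow>nat) \<times> (nat\<Rightarrow>nat) \<times> (nat\<Rightarrow>nat). i < Suc m \<longrightarrow> (inj (fst t) \<and> inj (fst (snd t)) \<and> inj (snd (snd t))
     \<and> fst t \<circ> map_sum id (fst (snd t)) = F ! i \<and> fst t \<circ> map_sum id (snd (snd t)) = F' ! i)"
  proof (intro allI)
    fix i
    show "\<exists>t :: (nat+nat\<Rightarrow>nat) \<times> (nat\<Rightarrow>nat) \<times> (nat\<Rightarrow>nat). i < Suc m \<longrightarrow> (inj (fst t) \<and> inj (fst (snd t)) \<and> inj (snd (snd t))
     \<and> fst t \<circ> map_sum id (fst (snd t)) = F ! i \<and> fst t \<circ> map_sum id (snd (snd t)) = F' ! i)"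
    proof (cases "i < Suc m")
      case False then show ?thesis by simp
    next
      case True note i = True
    have j1: "inj (F ! i)" "inj (F' ! i)" using assms(1,2) i unfolding inj_tuple_def by auto
    have j2: "F ! i \<circ> Inl = F' ! i \<circ> Inl"
    proof -
      have "map (\<lambda>g. g \<circ> Inl) F ! i = map (\<lambda>g. g \<circ> Inl) F' ! i" using assms(3) by (rule arg_cong)
      moreover have "i < length F" "i < length F'" using assms(1,2) i unfolding inj_tuple_def by auto
      ultimately show ?thesis by (simp only: nth_map)
    qed
    obtain H :: "nat + nat \<Rightarrow> nat" and v v' :: "nat \<Rightarrow> nat" where "inj H" "inj v" "inj v'" "H \<circ> map_sum id v = F ! i" "H \<circ> map_sum id v' = F' ! i"
      using claimB_level[OF j1 j2] by (elim exE conjE)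
    then have "i < Suc m \<longrightarrow> (inj (fst (H, v, v')) \<and> inj (fst (snd (H, v, v'))) \<and> inj (snd (snd (H, v, v')))
     \<and> fst (H, v, v') \<circ> map_sum id (fst (snd (H, v, v'))) = F ! i \<and> fst (H, v, v') \<circ> map_sum id (snd (snd (H, v, v'))) = F' ! i)"
      by (simp only: fst_conv snd_conv) simp
    then show "\<exists>t :: (nat+nat\<Rightarrow>nat) \<times> (nat\<Rightarrow>nat) \<times> (nat\<Rightarrow>nat). i < Suc m \<longrightarrow> (inj (fst t) \<and> inj (fst (snd t)) \<and> inj (snd (snd t))
     \<and> fst t \<circ> map_sum id (fst (snd t)) = F ! i \<and> fst t \<circ> map_sum id (snd (snd t)) = F' ! i)"
      by (rule exI[of _ "(H, v, v')"])
    qed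
  qed
  from choice[OF this] obtain T :: "nat \<Rightarrow> (nat+nat\<Rightarrow>nat) \<times> (nat\<Rightarrow>nat) \<times> (nat\<Rightarrow>nat)" where T0: "\<forall>i. i < Suc m \<longrightarrow> (inj (fst (T i)) \<and> inj (fst (snd (T i))) \<and> inj (snd (snd (T i)))
     \<and> fst (T i) \<circ> map_sum id (fst (snd (T i))) = F ! i \<and> fst (T i) \<circ> map_sum id (snd (snd (T i))) = F' ! i)"
    ..
  note T = T0[rule_format]
  define Hs where "Hs = map (\<lambda>i. fst (T i)) [0..<Suc m]"
  define Vs where "Vs = map (\<lambda>i. fst (snd (T i))) [0..<Suc m]"
  define Vs' where "Vs' = map (\<lambda>i. snd (snd (T i))) [0..<Suc m]"
  have iH: "inj_tuple m Hs" "inj_tuple m Vs" "inj_tuple m Vs'"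
    unfolding inj_tuple_def Hs_def Vs_def Vs'_def using T by auto
  have lF: "length F = Suc m" "length F' = Suc m" using assms unfolding inj_tuple_def by auto
  have lH: "length Hs = Suc m" "length Vs = Suc m" "length Vs' = Suc m" using iH unfolding inj_tuple_def by auto
  have nH: "Hs ! i = fst (T i)" "Vs ! i = fst (snd (T i))" "Vs' ! i = snd (snd (T i))" if "i < Suc m" for i
    using that unfolding Hs_def Vs_def Vs'_def by (simp_all del: upt_Suc)
  have e1: "bmul Hs (tuple_unit m) Vs = F"
  proof (rule nth_equalityI)
    show "length (bmul Hs (tuple_unit m) Vs) = length F" using lH lF by (simp add: bmul_length)
    fix i assume "i < length (bmul Hs (tuple_unit m) Vs)"
    then have i: "i < Suc m" using lH by (simp add: bmul_length)
    show "bmul Hs (tuple_unit m) Vs ! i = F ! i"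
      using bmul_nth[OF lH(1) unit_len lH(2) i] nH[OF i] T[OF i] i by simp
  qed
  have e2: "bmul Hs (tuple_unit m) Vs' = F'"
  proof (rule nth_equalityI)
    show "length (bmul Hs (tuple_unit m) Vs') = length F'" using lH lF by (simp add: bmul_length)
    fix i assume "i < length (bmul Hs (tuple_unit m) Vs')"
    then have i: "i < Suc m" using lH by (simp add: bmul_length)
    show "bmul Hs (tuple_unit m) Vs' ! i = F' ! i"
      using bmul_nth[OF lH(1) unit_len lH(3) i] nH[OF i] T[OF i] i by simp
  qed
  have g1: "bal_gen X act term_X term_act m (Hs, z, ()) (F, z, ())"
    using gen_step[OF iH(1) unit_inj iH(2) assms(4)] act_unit[OF assms(4)] e1 by simp
  have g2: "bal_gen X act term_X term_act m (Hs, z, ()) (F', z, ())"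
    using gen_step[OF iH(1) unit_inj iH(3) assms(4)] act_unit[OF assms(4)] e2 by simp
  show ?thesis unfolding bal_rel_def using g1 g2
    by (meson converse_r_into_equivclp equivclp_trans r_into_equivclp)
qed

end

lemma tm_len: "length u = Suc m \<Longrightarrow> length v = Suc m \<Longrightarrow> length (tuple_mult u v) = Suc m"
  by (simp add: tuple_mult_def)
lemma tm_nth: "length u = Suc m \<Longrightarrow> length v = Suc m \<Longrightarrow> i < Suc m \<Longrightarrow> tuple_mult u v ! i = u ! i \<circ> v ! i"
  by (simp add: tuple_mult_def)

lemma inl_bmul: "length f = Suc m \<Longrightarrow> length u = Suc m \<Longrightarrow> length v = Suc m \<Longrightarrow>
  map (\<lambda>g. g \<circ> Inl) (bmul f u v) = tuple_mult (map (\<lambda>g. g \<circ> Inl) f) u"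
proof (rule nth_equalityI)
  assume l: "length f = Suc m" "length u = Suc m" "length v = Suc m"
  show "length (map (\<lambda>g. g \<circ> Inl) (bmul f u v)) = length (tuple_mult (map (\<lambda>g. g \<circ> Inl) f) u)"
    using l by (simp add: bmul_length tuple_mult_def)
  fix i assume "i < length (map (\<lambda>g. g \<circ> Inl) (bmul f u v))"
  then have i: "i < Suc m" using l by (simp add: bmul_length)
  show "map (\<lambda>g. g \<circ> Inl) (bmul f u v) ! i = tuple_mult (map (\<lambda>g. g \<circ> Inl) f) u ! i"
    using l i by (simp add: bmul_length bmul_nth[OF l i] tuple_mult_def fun_eq_iff)
qed

lemma incl_len: "k \<le> m \<Longrightarrow> length (incl_k m k u) = Suc m"
  by (simp add: incl_k_def)
lemma incl_nth: "k \<le> m \<Longrightarrow> i < Suc m \<Longrightarrow> incl_k m k u ! i = (if i = k then u else id)"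
  by (simp add: incl_k_def nth_list_update)
lemma incl_inj: "inj u \<Longrightarrow> k \<le> m \<Longrightarrow> inj_tuple m (incl_k m k u)"
  unfolding inj_tuple_def
  by (auto simp: incl_len in_set_conv_nth incl_nth split: if_splits)

context emss begin

lemma act_fix:
  assumes y: "y \<in> X m" and l: "length cs = Suc m"
    and h: "\<And>k. k \<le> m \<Longrightarrow> cs ! k \<in> M_fix (AA k) \<and> k_supported act m k (AA k) y"
  shows "act m cs y = y"
proof -
  define w where "w j = map (\<lambda>i. if i < j then cs ! i else id) [0..<Suc m]" for j
  have wl: "length (w j) = Suc m" for j by (simp add: w_def del: upt_Suc)
  have wn: "w j ! i = (if i < j then cs ! i else id)" if "i < Suc m" for i j
    using that by (simp add: w_def del: upt_Suc)
  have ci: "inj (cs ! i)" if "i < Suc m" for i using h[of i] that by (simp add: M_fix_def)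
  have winj: "inj_tuple m (w j)" for j
    unfolding inj_tuple_def using wl wn ci by (auto simp: in_set_conv_nth)
  have "act m (w j) y = y" if "j \<le> Suc m" for j
    using that
  proof (induction j)
    case 0
    have "w 0 = tuple_unit m" by (rule nth_equalityI) (simp_all add: wl wn)
    then show ?case using act_unit[OF y] by simp
  next
    case (Suc j)
    then have j: "j \<le> m" by simp
    have ii: "inj_tuple m (incl_k m j (cs ! j))" using incl_inj ci j by simp
    have "w (Suc j) = tuple_mult (incl_k m j (cs ! j)) (w j)"
    proof (rule nth_equalityI)
      show "length (w (Suc j)) = length (tuple_mult (incl_k m j (cs ! j)) (w j))"
        using wl incl_len[OF j] tm_len by metis
      fix i assume "i < length (w (Suc j))"
      then have i: "i < Suc m" using wl by simp
      show "w (Suc j) ! i = tuple_mult (incl_k m j (cs ! j)) (w j) ! i"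
        using tm_nth[OF incl_len[OF j] wl i] incl_nth[OF j i] wn[OF i] by (cases "i = j") auto
    qed
    then have "act m (w (Suc j)) y = act m (incl_k m j (cs ! j)) (act m (w j) y)"
      using act_mult[OF ii winj y] by simp
    also have "\<dots> = act m (incl_k m j (cs ! j)) y" using Suc by simp
    also have "\<dots> = y" using h[OF j] unfolding k_supported_def by blast
    finally show ?case .
  qed
  moreover have "w (Suc m) = cs" by (rule nth_equalityI) (simp_all add: wl wn l)
  ultimately show ?thesis by (metis order_refl)
qed

lemma image_sub:
  fixes f :: "(nat + nat \<Rightarrow> nat) list"
  assumes f: "inj_tuple m f" and x: "x \<in> X m"
  shows "act m (map (\<lambda>g. g \<circ> Inl) f) x \<in> X_mu X act m"
proof -
  let ?a = "map (\<lambda>g. g \<circ> Inl) f"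
  have ai: "inj_tuple m ?a" using inlp_inj[OF f] .
  have lf: "length f = Suc m" using f unfolding inj_tuple_def by simp
  have la: "length ?a = Suc m" using lf by simp
  have "\<exists>A. coinfinite A \<and> k_supported act m k A (act m ?a x)" if k: "k \<le> m" for k
  proof (rule exI[of _ "range (?a ! k)"], rule conjI)
    let ?A = "range (?a ! k)"
    have fk: "inj (f ! k)" using f k unfolding inj_tuple_def by auto
    have ak: "?a ! k = f ! k \<circ> Inl" using k lf by simp
    have s1: "range (f ! k \<circ> Inr) \<subseteq> UNIV - ?A" unfolding ak using fk by (auto simp: inj_eq)
    have ir: "inj (f ! k \<circ> Inr)" by (rule inj_compose[OF fk]) (simp add: inj_on_def)
    have s2: "infinite (range (f ! k \<circ> Inr))"
    proof
      assume "finite (range (f ! k \<circ> Inr))"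
      then have "finite (UNIV :: nat set)" using finite_imageD[of "f ! k \<circ> Inr" UNIV] ir by simp
      then show False by simp
    qed
    show "coinfinite ?A" unfolding coinfinite_def using finite_subset[OF s1] s2 by blast
    show "k_supported act m k ?A (act m ?a x)"
      unfolding k_supported_def
    proof
      fix u assume u: "u \<in> M_fix ?A"
      then have ui: "inj u" by (simp add: M_fix_def)
      have ii: "inj_tuple m (incl_k m k u)" using incl_inj[OF ui k] .
      have "tuple_mult (incl_k m k u) ?a = ?a"
      proof (rule nth_equalityI)
        show "length (tuple_mult (incl_k m k u) ?a) = length ?a" using tm_len[OF incl_len[OF k] la] la by simp
        fix i assume "i < length (tuple_mult (incl_k m k u) ?a)"
        then have i: "i < Suc m" using tm_len[OF incl_len[OF k] la] by simp
        show "tuple_mult (incl_k m k u) ?a ! i = ?a ! i"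
          using tm_nth[OF incl_len[OF k] la i] incl_nth[OF k i] u
          by (auto simp: M_fix_def fun_eq_iff)
      qed
      then show "act m (incl_k m k u) (act m ?a x) = act m ?a x" using act_mult[OF ii ai x] by simp
    qed
  qed
  then show ?thesis unfolding X_mu_def using act_closed[OF ai x] by blast
qed

end

lemma bal_rel_trans [trans]:
  "bal_rel X a Y b m p q \<Longrightarrow> bal_rel X a Y b m q r \<Longrightarrow> bal_rel X a Y b m p r"
  unfolding bal_rel_def by (rule equivclp_trans)

lemma bal_rel_sym:
  "bal_rel X a Y b m p q \<Longrightarrow> bal_rel X a Y b m q p"
  unfolding bal_rel_def by (rule equivclp_sym)

lemma coinf_inl:
  fixes F :: "nat + nat \<Rightarrow> nat" assumes fk: "inj F"
  shows "coinfinite (range (F \<circ> Inl))"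
proof -
  have s1: "range (F \<circ> Inr) \<subseteq> UNIV - range (F \<circ> Inl)" using fk by (auto simp: inj_eq)
  have ir: "inj (F \<circ> Inr)" by (rule inj_compose[OF fk]) (simp add: inj_on_def)
  have s2: "infinite (range (F \<circ> Inr))"
  proof
    assume "finite (range (F \<circ> Inr))"
    then have "finite (UNIV :: nat set)" using finite_imageD[of "F \<circ> Inr" UNIV] ir by simp
    then show False by simp
  qed
  show ?thesis unfolding coinfinite_def using finite_subset[OF s1] s2 by blast
qed

lemma fixes_tm:
  assumes "length u = Suc m" "length a = Suc m" "\<And>i n. i < Suc m \<Longrightarrow> (u ! i) ((a ! i) n) = (a ! i) n"
  shows "tuple_mult u a = a"
proof (rule nth_equalityI)
  show "length (tuple_mult u a) = length a" using tm_len[OF assms(1,2)] assms(2) by simp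
  fix i assume "i < length (tuple_mult u a)"
  then have i: "i < Suc m" using tm_len[OF assms(1,2)] by simp
  show "tuple_mult u a ! i = a ! i" using tm_nth[OF assms(1,2) i] assms(3)[OF i] by (simp add: fun_eq_iff)
qed

context emss begin

lemma image_sup:
  assumes y: "y \<in> X_mu X act m"
  shows "\<exists>Gs :: (nat + nat \<Rightarrow> nat) list. inj_tuple m Gs \<and> act m (map (\<lambda>g. g \<circ> Inl) Gs) y = y"
proof -
  have yX: "y \<in> X m" and ys: "\<forall>k\<le>m. \<exists>A. coinfinite A \<and> k_supported act m k A y"
    using y unfolding X_mu_def by auto
  have "\<forall>k. \<exists>A. k \<le> m \<longrightarrow> coinfinite A \<and> k_supported act m k A y" using ys by blast
  from choice[OF this] obtain AA :: "nat \<Rightarrow> nat set" where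
    AA: "\<forall>k. k \<le> m \<longrightarrow> coinfinite (AA k) \<and> k_supported act m k (AA k) y" ..
  have "\<forall>k. \<exists>G :: nat + nat \<Rightarrow> nat. k \<le> m \<longrightarrow> inj G \<and> (\<forall>a \<in> AA k. G (Inl a) = a)"
  proof
    fix k
    show "\<exists>G :: nat + nat \<Rightarrow> nat. k \<le> m \<longrightarrow> inj G \<and> (\<forall>a \<in> AA k. G (Inl a) = a)"
    proof (cases "k \<le> m")
      case False then show ?thesis by simp
    next
      case True
      then have ci: "coinfinite (AA k)" using AA by blast
      obtain c c' :: "nat \<Rightarrow> nat" where c: "inj c" "\<forall>a\<in>AA k. c a = a" "infinite (- range c)"
        using level_cc[OF ci ci] by (elim exE conjE) blast
      obtain G :: "nat + nat \<Rightarrow> nat" where G: "inj G" "G \<circ> Inl = c"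
        using ext_inl[OF c(1) c(3)] by (elim exE conjE)
      have "inj G \<and> (\<forall>a \<in> AA k. G (Inl a) = a)" using G c(2) by (metis comp_apply)
      then show ?thesis by blast
    qed
  qed
  from choice[OF this] obtain GG :: "nat \<Rightarrow> nat + nat \<Rightarrow> nat" where
    GG: "\<forall>k. k \<le> m \<longrightarrow> inj (GG k) \<and> (\<forall>a \<in> AA k. GG k (Inl a) = a)" ..
  define Gs where "Gs = map GG [0..<Suc m]"
  have lG: "length Gs = Suc m" by (simp add: Gs_def del: upt_Suc)
  have nG: "Gs ! i = GG i" if "i < Suc m" for i using that by (simp add: Gs_def del: upt_Suc)
  have iG: "inj_tuple m Gs" unfolding inj_tuple_def using lG nG GG by (auto simp: in_set_conv_nth)
  have "act m (map (\<lambda>g. g \<circ> Inl) Gs) y = y"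
  proof (rule act_fix[OF yX, where AA = AA])
    show "length (map (\<lambda>g. g \<circ> Inl) Gs) = Suc m" using lG by simp
    fix k assume k: "k \<le> m"
    have "map (\<lambda>g. g \<circ> Inl) Gs ! k = GG k \<circ> Inl" using k lG nG by simp
    moreover have "inj (GG k \<circ> Inl)" using GG k by (intro inj_compose) (auto simp: inj_on_def)
    ultimately show "map (\<lambda>g. g \<circ> Inl) Gs ! k \<in> M_fix (AA k) \<and> k_supported act m k (AA k) y"
      using GG AA k by (simp add: M_fix_def)
  qed
  then show ?thesis using iG by blast
qed

lemma reach:
  fixes f Gs :: "(nat + nat \<Rightarrow> nat) list"
  assumes f: "inj_tuple m f" and x: "x \<in> X m" and G: "inj_tuple m Gs" and ds: "inj_tuple m ds"
    and fx: "\<And>i n. i < Suc m \<Longrightarrow> (Gs ! i) (Inl ((f ! i) (Inl n))) = (f ! i) (Inl n)"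
    and dsy: "act m ds (act m (map (\<lambda>g. g \<circ> Inl) f) x) = act m (map (\<lambda>g. g \<circ> Inl) f) x"
  shows "bal_rel X act term_X term_act m (f, x, ()) (bmul Gs ds (tuple_unit m), act m (map (\<lambda>g. g \<circ> Inl) f) x, ())"
proof -
  let ?a = "map (\<lambda>g. g \<circ> Inl) f"
  let ?y = "act m ?a x"
  have ai: "inj_tuple m ?a" using inlp_inj[OF f] .
  have lf: "length f = Suc m" and lG: "length Gs = Suc m" and la: "length ?a = Suc m"
    using f G unfolding inj_tuple_def by auto
  have yX: "?y \<in> X m" using act_closed[OF ai x] .
  have g1: "bal_gen X act term_X term_act m (Gs, ?y, ()) (bmul Gs ?a (tuple_unit m), x, ())"
    using gen_step[OF G ai unit_inj x] .
  have e: "map (\<lambda>g. g \<circ> Inl) (bmul Gs ?a (tuple_unit m)) = ?a"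
  proof -
    have "map (\<lambda>g. g \<circ> Inl) (bmul Gs ?a (tuple_unit m)) = tuple_mult (map (\<lambda>g. g \<circ> Inl) Gs) ?a"
      using inl_bmul[OF lG la unit_len] .
    also have "\<dots> = ?a"
    proof (rule fixes_tm)
      show "length (map (\<lambda>g. g \<circ> Inl) Gs) = Suc m" using lG by simp
      show "length ?a = Suc m" using la .
      fix i n assume i: "i < Suc m"
      show "(map (\<lambda>g. g \<circ> Inl) Gs ! i) ((?a ! i) n) = (?a ! i) n" using fx[OF i] i lG lf by simp
    qed
    finally show ?thesis .
  qed
  have c1: "bal_rel X act term_X term_act m (bmul Gs ?a (tuple_unit m), x, ()) (f, x, ())"
    using claimB[OF bmul_inj[OF G ai unit_inj] f e x] .
  have g2: "bal_gen X act term_X term_act m (Gs, act m ds ?y, ()) (bmul Gs ds (tuple_unit m), ?y, ())"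
    using gen_step[OF G ds unit_inj yX] .
  then have g2': "bal_gen X act term_X term_act m (Gs, ?y, ()) (bmul Gs ds (tuple_unit m), ?y, ())"
    using dsy by simp
  have "bal_rel X act term_X term_act m (f, x, ()) (bmul Gs ?a (tuple_unit m), x, ())"
    using c1 unfolding bal_rel_def by (rule equivclp_sym)
  also have "bal_rel X act term_X term_act m (bmul Gs ?a (tuple_unit m), x, ()) (Gs, ?y, ())"
    using g1 unfolding bal_rel_def by (rule converse_r_into_equivclp)
  also have "bal_rel X act term_X term_act m (Gs, ?y, ()) (bmul Gs ds (tuple_unit m), ?y, ())"
    using g2' unfolding bal_rel_def by (rule r_into_equivclp)
  finally show ?thesis .
qed

end

context emss begin

lemma inj_Phi:
  fixes f f' :: "(nat + nat \<Rightarrow> nat) list"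
  assumes f: "inj_tuple m f" and f': "inj_tuple m f'" and x: "x \<in> X m" and x': "x' \<in> X m"
    and eq: "act m (map (\<lambda>g. g \<circ> Inl) f) x = act m (map (\<lambda>g. g \<circ> Inl) f') x'"
  shows "bal_rel X act term_X term_act m (f, x, ()) (f', x', ())"
proof -
  let ?a = "map (\<lambda>g. g \<circ> Inl) f" and ?a' = "map (\<lambda>g. g \<circ> Inl) f'"
  have lf: "length f = Suc m" "length f' = Suc m" using f f' unfolding inj_tuple_def by auto
  have fi: "inj (f ! i)" "inj (f' ! i)" if "i < Suc m" for i using f f' that unfolding inj_tuple_def by auto
  have "\<forall>i. \<exists>p :: (nat + nat \<Rightarrow> nat) \<times> (nat + nat \<Rightarrow> nat). i < Suc m \<longrightarrow>
      inj (fst p) \<and> inj (snd p) \<and> (\<forall>n. fst p (Inl ((f ! i) (Inl n))) = (f ! i) (Inl n))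
      \<and> (\<forall>n. snd p (Inl ((f' ! i) (Inl n))) = (f' ! i) (Inl n))
      \<and> (fst p \<circ> Inl) \<circ> (snd p \<circ> Inl) = (snd p \<circ> Inl) \<circ> (fst p \<circ> Inl)"
  proof
    fix i
    show "\<exists>p :: (nat + nat \<Rightarrow> nat) \<times> (nat + nat \<Rightarrow> nat). i < Suc m \<longrightarrow>
      inj (fst p) \<and> inj (snd p) \<and> (\<forall>n. fst p (Inl ((f ! i) (Inl n))) = (f ! i) (Inl n))
      \<and> (\<forall>n. snd p (Inl ((f' ! i) (Inl n))) = (f' ! i) (Inl n))
      \<and> (fst p \<circ> Inl) \<circ> (snd p \<circ> Inl) = (snd p \<circ> Inl) \<circ> (fst p \<circ> Inl)"
    proof (cases "i < Suc m")
      case False then show ?thesis by simp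
    next
      case True
      obtain c c' :: "nat \<Rightarrow> nat" where c: "inj c" "inj c'" "\<forall>a\<in>range (f ! i \<circ> Inl). c a = a"
        "\<forall>a\<in>range (f' ! i \<circ> Inl). c' a = a" "c \<circ> c' = c' \<circ> c" "infinite (- range c)" "infinite (- range c')"
        using level_cc[OF coinf_inl[OF fi(1)[OF True]] coinf_inl[OF fi(2)[OF True]]] by (elim exE conjE)
      obtain G :: "nat + nat \<Rightarrow> nat" where G: "inj G" "G \<circ> Inl = c"
        using ext_inl[OF c(1) c(6)] by (elim exE conjE)
      obtain G' :: "nat + nat \<Rightarrow> nat" where G': "inj G'" "G' \<circ> Inl = c'"
        using ext_inl[OF c(2) c(7)] by (elim exE conjE)
      have h1: "\<forall>n. G (Inl ((f ! i) (Inl n))) = (f ! i) (Inl n)" using G(2) c(3) by (metis comp_apply rangeI)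
      have h2: "\<forall>n. G' (Inl ((f' ! i) (Inl n))) = (f' ! i) (Inl n)" using G'(2) c(4) by (metis comp_apply rangeI)
      have h3: "(G \<circ> Inl) \<circ> (G' \<circ> Inl) = (G' \<circ> Inl) \<circ> (G \<circ> Inl)" using G(2) G'(2) c(5) by simp
      have "inj (fst (G, G')) \<and> inj (snd (G, G')) \<and> (\<forall>n. fst (G, G') (Inl ((f ! i) (Inl n))) = (f ! i) (Inl n))
      \<and> (\<forall>n. snd (G, G') (Inl ((f' ! i) (Inl n))) = (f' ! i) (Inl n))
      \<and> (fst (G, G') \<circ> Inl) \<circ> (snd (G, G') \<circ> Inl) = (snd (G, G') \<circ> Inl) \<circ> (fst (G, G') \<circ> Inl)"
        unfolding fst_conv snd_conv using G(1) G'(1) h1 h2 h3 by (intro conjI)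
      then show ?thesis by (intro impI exI[of _ "(G, G')"])
    qed
  qed
  from choice[OF this] obtain P :: "nat \<Rightarrow> (nat + nat \<Rightarrow> nat) \<times> (nat + nat \<Rightarrow> nat)" where
    P0: "\<forall>i. i < Suc m \<longrightarrow>
      inj (fst (P i)) \<and> inj (snd (P i)) \<and> (\<forall>n. fst (P i) (Inl ((f ! i) (Inl n))) = (f ! i) (Inl n))
      \<and> (\<forall>n. snd (P i) (Inl ((f' ! i) (Inl n))) = (f' ! i) (Inl n))
      \<and> (fst (P i) \<circ> Inl) \<circ> (snd (P i) \<circ> Inl) = (snd (P i) \<circ> Inl) \<circ> (fst (P i) \<circ> Inl)" ..
  note P = P0[rule_format]
  define Gs where "Gs = map (\<lambda>i. fst (P i)) [0..<Suc m]"
  define Gs' where "Gs' = map (\<lambda>i. snd (P i)) [0..<Suc m]"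
  have lG: "length Gs = Suc m" "length Gs' = Suc m" by (simp_all add: Gs_def Gs'_def del: upt_Suc)
  have nG: "Gs ! i = fst (P i)" "Gs' ! i = snd (P i)" if "i < Suc m" for i
    using that by (simp_all add: Gs_def Gs'_def del: upt_Suc)
  have iG: "inj_tuple m Gs" "inj_tuple m Gs'" unfolding inj_tuple_def using lG nG P by (auto simp: in_set_conv_nth)
  let ?cs = "map (\<lambda>g. g \<circ> Inl) Gs" and ?cs' = "map (\<lambda>g. g \<circ> Inl) Gs'"
  have ic: "inj_tuple m ?cs" "inj_tuple m ?cs'" using inlp_inj iG by auto
  have ai: "inj_tuple m ?a" "inj_tuple m ?a'" using inlp_inj f f' by auto
  have lc: "length ?cs = Suc m" "length ?cs' = Suc m" "length ?a = Suc m" "length ?a'= Suc m" using lG lf by auto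
  let ?y = "act m ?a x"
  have t1: "tuple_mult ?cs ?a = ?a"
    by (rule fixes_tm[OF lc(1) lc(3)]) (use P nG lG lf in simp)
  have t2: "tuple_mult ?cs' ?a' = ?a'"
    by (rule fixes_tm[OF lc(2) lc(4)]) (use P nG lG lf in simp)
  have y1: "act m ?cs' ?y = ?y"
    unfolding eq using act_mult[OF ic(2) ai(2) x'] t2 by simp
  have y2: "act m ?cs (act m ?a' x') = act m ?a' x'"
    using act_mult[OF ic(1) ai(1) x] t1 eq by simp
  have r1: "bal_rel X act term_X term_act m (f, x, ()) (bmul Gs ?cs' (tuple_unit m), ?y, ())"
    by (rule reach[OF f x iG(1) ic(2) _ y1]) (use P nG in simp)
  have r2: "bal_rel X act term_X term_act m (f', x', ()) (bmul Gs' ?cs (tuple_unit m), act m ?a' x', ())"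
    by (rule reach[OF f' x' iG(2) ic(1) _ y2]) (use P nG in simp)
  have e: "map (\<lambda>g. g \<circ> Inl) (bmul Gs ?cs' (tuple_unit m)) = map (\<lambda>g. g \<circ> Inl) (bmul Gs' ?cs (tuple_unit m))"
  proof -
    have "map (\<lambda>g. g \<circ> Inl) (bmul Gs ?cs' (tuple_unit m)) = tuple_mult ?cs ?cs'"
      using inl_bmul[OF lG(1) lc(2) unit_len] .
    also have "\<dots> = tuple_mult ?cs' ?cs"
    proof (rule nth_equalityI)
      show "length (tuple_mult ?cs ?cs') = length (tuple_mult ?cs' ?cs)" using tm_len[OF lc(1,2)] tm_len[OF lc(2,1)] by simp
      fix i assume "i < length (tuple_mult ?cs ?cs')"
      then have i: "i < Suc m" using tm_len[OF lc(1,2)] by simp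
      show "tuple_mult ?cs ?cs' ! i = tuple_mult ?cs' ?cs ! i"
        using tm_nth[OF lc(1,2) i] tm_nth[OF lc(2,1) i] P[OF i] nG[OF i] lG i by simp
    qed
    also have "\<dots> = map (\<lambda>g. g \<circ> Inl) (bmul Gs' ?cs (tuple_unit m))"
      using inl_bmul[OF lG(2) lc(1) unit_len] by simp
    finally show ?thesis .
  qed
  have yX: "?y \<in> X m" using act_closed[OF ai(1) x] .
  have c: "bal_rel X act term_X term_act m (bmul Gs ?cs' (tuple_unit m), ?y, ()) (bmul Gs' ?cs (tuple_unit m), ?y, ())"
    using claimB[OF bmul_inj[OF iG(1) ic(2) unit_inj] bmul_inj[OF iG(2) ic(1) unit_inj] e yX] .
  note r2' = bal_rel_sym[OF r2[folded eq]]
  show ?thesis using bal_rel_trans[OF bal_rel_trans[OF r1 c] r2'] .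
qed

end

lemma inl_tm:
  assumes "length w = Suc m" "length f = Suc m"
  shows "map (\<lambda>g. g \<circ> Inl) (tuple_mult w f) = tuple_mult w (map (\<lambda>g. g \<circ> Inl) f)"
proof (rule nth_equalityI)
  show "length (map (\<lambda>g. g \<circ> Inl) (tuple_mult w f)) = length (tuple_mult w (map (\<lambda>g. g \<circ> Inl) f))"
    using assms by (simp add: tuple_mult_def)
  fix i assume "i < length (map (\<lambda>g. g \<circ> Inl) (tuple_mult w f))"
  then have i: "i < Suc m" using assms by (simp add: tuple_mult_def)
  show "map (\<lambda>g. g \<circ> Inl) (tuple_mult w f) ! i = tuple_mult w (map (\<lambda>g. g \<circ> Inl) f) ! i"
    using assms i by (simp add: tuple_mult_def comp_assoc)
qed

lemma inl_restr:
  assumes "simp_op m n \<alpha>" "length f = Suc n"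
  shows "map (\<lambda>g. g \<circ> Inl) (tuple_restr f \<alpha>) = tuple_restr (map (\<lambda>g. g \<circ> Inl) f) \<alpha>"
  using assms unfolding tuple_restr_def simp_op_def by (auto simp: less_Suc_eq_le)

theorem proposition2p29:
  fixes X :: "nat \<Rightarrow> 'a set"
    and sim :: "nat \<Rightarrow> nat \<Rightarrow> nat list \<Rightarrow> 'a \<Rightarrow> 'a"
    and act :: "nat \<Rightarrow> (nat \<Rightarrow> nat) list \<Rightarrow> 'a \<Rightarrow> 'a"
  assumes "EM_sset X sim act"
  shows "\<forall>m.
     \<comment> \<open>Phi is well defined on the quotient and injective on it\<close>
     (\<forall>p\<in>bal_reps X term_X m. \<forall>q\<in>bal_reps X term_X m.
        Phi act term_act m p = Phi act term_act m q
          \<longleftrightarrow> bal_rel X act term_X term_act m p q)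
     \<comment> \<open>its image is exactly X^mu (x * = X^mu)\<close>
   \<and> Phi act term_act m ` bal_reps X term_X m = X_mu X act m \<times> term_X m
     \<comment> \<open>Phi is E M-equivariant (E M acting by postcomposition on f)\<close>
   \<and> (\<forall>w f x y. EM_simplex m w \<longrightarrow> (f, x, y) \<in> bal_reps X term_X m \<longrightarrow>
        Phi act term_act m (tuple_mult w f, x, y)
          = (act m w (fst (Phi act term_act m (f, x, y))),
             term_act m w (snd (Phi act term_act m (f, x, y)))))
     \<comment> \<open>Phi is simplicial (precomposition on f)\<close>
   \<and> (\<forall>n \<alpha> f x y. simp_op m n \<alpha> \<longrightarrow> (f, x, y) \<in> bal_reps X term_X n \<longrightarrow>
        Phi act term_act m (tuple_restr f \<alpha>, sim m n \<alpha> x, term_sim m n \<alpha> y)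
          = (sim m n \<alpha> (fst (Phi act term_act n (f, x, y))),
             term_sim m n \<alpha> (snd (Phi act term_act n (f, x, y)))))"
proof (rule allI, intro conjI)
  interpret E: emss X sim act by (unfold_locales) (rule assms)
  fix m
  show "\<forall>p\<in>bal_reps X term_X m. \<forall>q\<in>bal_reps X term_X m.
        Phi act term_act m p = Phi act term_act m q \<longleftrightarrow> bal_rel X act term_X term_act m p q"
  proof (intro ballI iffI)
    fix p q assume "p \<in> bal_reps X term_X m" "q \<in> bal_reps X term_X m"
      "bal_rel X act term_X term_act m p q"
    then show "Phi act term_act m p = Phi act term_act m q" using E.Phi_rel by blast
  next
    fix p q assume p: "p \<in> bal_reps X term_X m" and q: "q \<in> bal_reps X term_X m"
      and e: "Phi act term_act m p = Phi act term_act m q"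
    obtain f x where pf: "p = (f, x, ())" "inj_tuple m f" "x \<in> X m"
      using p unfolding bal_reps_def by auto
    obtain f' x' where qf: "q = (f', x', ())" "inj_tuple m f'" "x' \<in> X m"
      using q unfolding bal_reps_def by auto
    have "act m (map (\<lambda>g. g \<circ> Inl) f) x = act m (map (\<lambda>g. g \<circ> Inl) f') x'"
      using e pf(1) qf(1) by (simp add: Phi_simp)
    then show "bal_rel X act term_X term_act m p q"
      using E.inj_Phi[OF pf(2) qf(2) pf(3) qf(3)] pf(1) qf(1) by simp
  qed
  show "Phi act term_act m ` bal_reps X term_X m = X_mu X act m \<times> term_X m"
  proof
    show "Phi act term_act m ` bal_reps X term_X m \<subseteq> X_mu X act m \<times> term_X m"
    proof
      fix z assume "z \<in> Phi act term_act m ` bal_reps X term_X m"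
      then obtain f x where "z = Phi act term_act m (f, x, ())" "inj_tuple m f" "x \<in> X m"
        unfolding bal_reps_def by auto
      then show "z \<in> X_mu X act m \<times> term_X m"
        using E.image_sub by (simp add: Phi_simp term_X_def)
    qed
    show "X_mu X act m \<times> term_X m \<subseteq> Phi act term_act m ` bal_reps X term_X m"
    proof
      fix z assume z: "z \<in> X_mu X act m \<times> term_X m"
      then obtain y where y: "z = (y, ())" "y \<in> X_mu X act m" by (auto simp: term_X_def)
      then have yX: "y \<in> X m" unfolding X_mu_def by simp
      obtain Gs :: "(nat + nat \<Rightarrow> nat) list" where G: "inj_tuple m Gs" "act m (map (\<lambda>g. g \<circ> Inl) Gs) y = y"
        using E.image_sup[OF y(2)] by blast
      have "(Gs, y, ()) \<in> bal_reps X term_X m" using G yX by (simp add: bal_reps_def term_X_def)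
      moreover have "z = Phi act term_act m (Gs, y, ())" using G y by (simp add: Phi_simp)
      ultimately show "z \<in> Phi act term_act m ` bal_reps X term_X m" by blast
    qed
  qed
  show "\<forall>w f x y. EM_simplex m w \<longrightarrow> (f, x, y) \<in> bal_reps X term_X m \<longrightarrow>
        Phi act term_act m (tuple_mult w f, x, y)
          = (act m w (fst (Phi act term_act m (f, x, y))),
             term_act m w (snd (Phi act term_act m (f, x, y))))"
  proof (intro allI impI)
    fix w f x y assume w: "EM_simplex m w" and r: "(f, x, y) \<in> bal_reps X term_X m"
    then have f: "inj_tuple m f" and x: "x \<in> X m" unfolding bal_reps_def by auto
    have l: "length w = Suc m" "length f = Suc m" using w f unfolding inj_tuple_def by auto
    show "Phi act term_act m (tuple_mult w f, x, y)
          = (act m w (fst (Phi act term_act m (f, x, y))),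
             term_act m w (snd (Phi act term_act m (f, x, y))))"
      using E.act_mult[OF w inlp_inj[OF f] x] inl_tm[OF l] by (simp add: Phi_simp)
  qed
  show "\<forall>n \<alpha> f x y. simp_op m n \<alpha> \<longrightarrow> (f, x, y) \<in> bal_reps X term_X n \<longrightarrow>
        Phi act term_act m (tuple_restr f \<alpha>, sim m n \<alpha> x, term_sim m n \<alpha> y)
          = (sim m n \<alpha> (fst (Phi act term_act n (f, x, y))),
             term_sim m n \<alpha> (snd (Phi act term_act n (f, x, y))))"
  proof (intro allI impI)
    fix n \<alpha> f x y assume a: "simp_op m n \<alpha>" and r: "(f, x, y) \<in> bal_reps X term_X n"
    then have f: "inj_tuple n f" and x: "x \<in> X n" unfolding bal_reps_def by auto
    have l: "length f = Suc n" using f unfolding inj_tuple_def by auto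
    show "Phi act term_act m (tuple_restr f \<alpha>, sim m n \<alpha> x, term_sim m n \<alpha> y)
          = (sim m n \<alpha> (fst (Phi act term_act n (f, x, y))),
             term_sim m n \<alpha> (snd (Phi act term_act n (f, x, y))))"
      using E.sim_act[OF a inlp_inj[OF f] x] inl_restr[OF a l] by (simp add: Phi_simp)
  qed
qed

end
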